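(* Let $X$ be a complex reflexive Banach space, $x\in X$ a unit vector, and $x^*\in X^*$ a functional that exposes $x$. If $T=\{e^{tA}:t\ge 0\}$ is a $(C_0)$ contraction semigroup with generator $A$ such that \[\lim_{t\to\infty}|\langle T(t)x,x^*\rangle|=1,\] then $x$ is in the domain of $A$ and $Ax=i\lambda x$ for some real number $\lambda$.
   Context: A functional $x^*\in X^*$ exposes the unit vector $x$ if $1=\|x^*\|=\langle x,x^*\rangle$ and $\Re\langle y,x^*\rangle<1$ for every unit vector $y\neq x$. *)

theory Defs
  imports "HOL-Analysis.Analysis"
begin

class complex_banach = banach +
  fixes cscale :: "complex \<Rightarrow> 'a \<Rightarrow> 'a"  (infixr "*\<^sub>C" 75)
  assumes cscale_of_real: "cscale (complex_of_real r) x = r *\<^sub>R x"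
    and cscale_add_left: "cscale (a + b) x = cscale a x + cscale b x"
    and cscale_add_right: "cscale a (x + y) = cscale a x + cscale a y"
    and cscale_assoc: "cscale a (cscale b x) = cscale (a * b) x"
    and norm_cscale: "norm (cscale a x) = cmod a * norm x"

definition bounded_clinear_op :: "('a::complex_banach \<Rightarrow> 'b::complex_banach) \<Rightarrow> bool" where
  "bounded_clinear_op L \<longleftrightarrow> bounded_linear L \<and> (\<forall>c x. L (c *\<^sub>C x) = c *\<^sub>C L x)"

definition dual_space :: "('a::complex_banach \<Rightarrow> complex) set" where
  "dual_space = {f. bounded_linear f \<and> (\<forall>c x. f (c *\<^sub>C x) = c * f x)}"

text \<open>Reflexivity: every bounded complex-linear functional on X* (with the operator
norm) is evaluation at some point of X, i.e. the canonical map X \<rightarrow> X** is onto.\<close>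
definition reflexive_space :: "'a::complex_banach itself \<Rightarrow> bool" where
  "reflexive_space _ \<longleftrightarrow>
    (\<forall>\<Phi> :: ('a \<Rightarrow> complex) \<Rightarrow> complex.
       ((\<forall>f\<in>dual_space. \<forall>g\<in>dual_space. \<Phi> (\<lambda>x. f x + g x) = \<Phi> f + \<Phi> g) \<and>
        (\<forall>f\<in>dual_space. \<forall>c. \<Phi> (\<lambda>x. c * f x) = c * \<Phi> f) \<and>
        (\<exists>K. \<forall>f\<in>dual_space. cmod (\<Phi> f) \<le> K * onorm f))
       \<longrightarrow> (\<exists>z::'a. \<forall>f\<in>dual_space. \<Phi> f = f z))"

definition exposes :: "('a::complex_banach \<Rightarrow> complex) \<Rightarrow> 'a \<Rightarrow> bool" where
  "exposes xs x \<longleftrightarrow> xs \<in> dual_space \<and> norm x = 1 \<and> onorm xs = 1 \<and> xs x = 1 \<and>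
     (\<forall>y. norm y = 1 \<and> y \<noteq> x \<longrightarrow> Re (xs y) < 1)"

definition C0_contraction_semigroup :: "(real \<Rightarrow> 'a::complex_banach \<Rightarrow> 'a) \<Rightarrow> bool" where
  "C0_contraction_semigroup T \<longleftrightarrow>
     (\<forall>t\<ge>0. bounded_clinear_op (T t)) \<and>
     (\<forall>x. T 0 x = x) \<and>
     (\<forall>s\<ge>0. \<forall>t\<ge>0. \<forall>x. T (s + t) x = T s (T t x)) \<and>
     (\<forall>x. ((\<lambda>t. T t x) \<longlongrightarrow> x) (at_right 0)) \<and>
     (\<forall>t\<ge>0. \<forall>x. norm (T t x) \<le> norm x)"

definition gen_domain :: "(real \<Rightarrow> 'a::complex_banach \<Rightarrow> 'a) \<Rightarrow> 'a set" where
  "gen_domain T = {x. \<exists>y. ((\<lambda>h. (1 / h) *\<^sub>R (T h x - x)) \<longlongrightarrow> y) (at_right 0)}"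

definition generator :: "(real \<Rightarrow> 'a::complex_banach \<Rightarrow> 'a) \<Rightarrow> 'a \<Rightarrow> 'a" where
  "generator T x = Lim (at_right 0) (\<lambda>h. (1 / h) *\<^sub>R (T h x - x))"

end

theory Submission
  imports Defs
begin

lemma real_hahn_banach:
  fixes z :: "'a::real_normed_vector"
  shows "\<exists>g::'a\<Rightarrow>real. (\<forall>a b. g (a+b) = g a + g b) \<and> (\<forall>c a. g (c *\<^sub>R a) = c * g a)
     \<and> (\<forall>a. g a \<le> norm a) \<and> g z = norm z"
proof -
  define A where "A = {G :: ('a \<times> real) set.
     (\<forall>a r s. (a,r)\<in>G \<longrightarrow> (a,s)\<in>G \<longrightarrow> r = s) \<and>
     (\<forall>a r b s. (a,r)\<in>G \<longrightarrow> (b,s)\<in>G \<longrightarrow> (a+b, r+s)\<in>G) \<and>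
     (\<forall>a r c. (a,r)\<in>G \<longrightarrow> (c *\<^sub>R a, c*r)\<in>G) \<and>
     (\<forall>a r. (a,r)\<in>G \<longrightarrow> r \<le> norm a) \<and> (z, norm z) \<in> G}"
  define G0 where "G0 = range (\<lambda>c. (c *\<^sub>R z, c * norm z))"
  have G0A: "G0 \<in> A"
  proof -
    have f: "c * norm z = d * norm z" if "c *\<^sub>R z = d *\<^sub>R z" for c d
      using that by (cases "z = 0") (auto simp: scaleR_cancel_right)
    have b: "c * norm z \<le> norm (c *\<^sub>R z)" for c
      by (simp add: mult_right_mono)
    show ?thesis unfolding A_def G0_def
    proof (intro CollectI conjI allI impI)
      fix a r s assume "(a, r) \<in> range (\<lambda>c. (c *\<^sub>R z, c * norm z))" "(a, s) \<in> range (\<lambda>c. (c *\<^sub>R z, c * norm z))"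
      then obtain c d where "a = c *\<^sub>R z" "r = c * norm z" "a = d *\<^sub>R z" "s = d * norm z" by blast
      then show "r = s" using f by metis
    next
      fix a r b s assume "(a, r) \<in> range (\<lambda>c. (c *\<^sub>R z, c * norm z))" "(b, s) \<in> range (\<lambda>c. (c *\<^sub>R z, c * norm z))"
      then obtain c d where "a = c *\<^sub>R z" "r = c * norm z" "b = d *\<^sub>R z" "s = d * norm z" by blast
      then have "(a + b, r + s) = ((c + d) *\<^sub>R z, (c + d) * norm z)" by (simp add: algebra_simps)
      then show "(a + b, r + s) \<in> range (\<lambda>c. (c *\<^sub>R z, c * norm z))" by blast
    next
      fix a r e assume "(a, r) \<in> range (\<lambda>c. (c *\<^sub>R z, c * norm z))"
      then obtain c where "a = c *\<^sub>R z" "r = c * norm z" by blast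
      then have "(e *\<^sub>R a, e * r) = ((e * c) *\<^sub>R z, (e * c) * norm z)" by simp
      then show "(e *\<^sub>R a, e * r) \<in> range (\<lambda>c. (c *\<^sub>R z, c * norm z))" by blast
    next
      fix a r assume "(a, r) \<in> range (\<lambda>c. (c *\<^sub>R z, c * norm z))"
      then obtain c where "a = c *\<^sub>R z" "r = c * norm z" by blast
      then show "r \<le> norm a" using b by simp
    next
      have "(z, norm z) = ((1::real) *\<^sub>R z, 1 * norm z)" by simp
      then show "(z, norm z) \<in> range (\<lambda>c. (c *\<^sub>R z, c * norm z))" by blast
    qed
  qed
  have chains: "\<forall>C\<in>chains A. \<exists>U\<in>A. \<forall>X\<in>C. X \<subseteq> U"
  proof
    fix C assume C: "C \<in> chains A"
    show "\<exists>U\<in>A. \<forall>X\<in>C. X \<subseteq> U"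
    proof (cases "C = {}")
      case True then show ?thesis using G0A by auto
    next
      case False
      have CA: "C \<subseteq> A" and ch: "\<And>X Y. X \<in> C \<Longrightarrow> Y \<in> C \<Longrightarrow> X \<subseteq> Y \<or> Y \<subseteq> X"
        using C by (auto simp: chains_def chain_subset_def)
      have two: "\<exists>X\<in>C. p \<in> X \<and> q \<in> X" if "p \<in> \<Union>C" "q \<in> \<Union>C" for p q
        using that ch by blast
      have "\<Union>C \<in> A"
        unfolding A_def
      proof (intro CollectI conjI allI impI)
        fix a r s assume "(a,r) \<in> \<Union>C" "(a,s) \<in> \<Union>C"
        then obtain X where "X \<in> C" "(a,r) \<in> X" "(a,s) \<in> X" using two by blast
        then show "r = s" using CA unfolding A_def by blast
      next
        fix a r b s assume "(a,r) \<in> \<Union>C" "(b,s) \<in> \<Union>C"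
        then obtain X where "X \<in> C" "(a,r) \<in> X" "(b,s) \<in> X" using two by blast
        then show "(a+b, r+s) \<in> \<Union>C" using CA unfolding A_def by blast
      next
        fix a r c assume "(a,r) \<in> \<Union>C"
        then show "(c *\<^sub>R a, c*r) \<in> \<Union>C" using CA unfolding A_def by blast
      next
        fix a r assume "(a,r) \<in> \<Union>C"
        then show "r \<le> norm a" using CA unfolding A_def by blast
      next
        show "(z, norm z) \<in> \<Union>C" using CA False unfolding A_def by blast
      qed
      then show ?thesis by blast
    qed
  qed
  obtain M where MA: "M \<in> A" and Mmax: "\<And>X. X \<in> A \<Longrightarrow> M \<subseteq> X \<Longrightarrow> X = M"
    using Zorn_Lemma2[OF chains] by blast
  have Mf: "\<And>a r s. (a,r)\<in>M \<Longrightarrow> (a,s)\<in>M \<Longrightarrow> r = s"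
   and Madd: "\<And>a r b s. (a,r)\<in>M \<Longrightarrow> (b,s)\<in>M \<Longrightarrow> (a+b, r+s)\<in>M"
   and Msc: "\<And>a r c. (a,r)\<in>M \<Longrightarrow> (c *\<^sub>R a, c*r)\<in>M"
   and Mb: "\<And>a r. (a,r)\<in>M \<Longrightarrow> r \<le> norm a"
   and Mz: "(z, norm z) \<in> M"
    using MA unfolding A_def by blast+
  have M0: "(0,0) \<in> M" using Msc[OF Mz, of 0] by simp
  have total: "\<exists>r. (w,r) \<in> M" for w
  proof (rule ccontr)
    assume nw: "\<not> (\<exists>r. (w,r) \<in> M)"
    have key: "r - norm (a - w) \<le> norm (b + w) - s" if "(a,r)\<in>M" "(b,s)\<in>M" for a r b s
    proof -
      have "r + s \<le> norm (a + b)" using Mb[OF Madd[OF that]] .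
      also have "\<dots> \<le> norm (a - w) + norm (b + w)"
        using norm_triangle_ineq[of "a - w" "b + w"] by simp
      finally show ?thesis by simp
    qed
    define L where "L = {r - norm (a - w) | a r. (a,r)\<in>M}"
    have Lne: "L \<noteq> {}" using M0 unfolding L_def by blast
    have Lbdd: "bdd_above L"
      unfolding L_def bdd_above_def using key[OF _ M0] by auto
    define \<xi> where "\<xi> = Sup L"
    have lo: "r - norm (a - w) \<le> \<xi>" if "(a,r)\<in>M" for a r
      unfolding \<xi>_def by (rule cSup_upper[OF _ Lbdd]) (use that L_def in blast)
    have hi: "\<xi> \<le> norm (b + w) - s" if "(b,s)\<in>M" for b s
      unfolding \<xi>_def by (rule cSup_least[OF Lne]) (use key that L_def in blast)
    define M' where "M' = {(a + c *\<^sub>R w, r + c * \<xi>) | a r c. (a,r)\<in>M}"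
    have "M' \<in> A"
      unfolding A_def
    proof (intro CollectI conjI allI impI)
      fix p r s assume "(p,r) \<in> M'" "(p,s) \<in> M'"
      then obtain a r0 c a' r0' c' where h: "(a,r0)\<in>M" "(a',r0')\<in>M" "p = a + c *\<^sub>R w" "p = a' + c' *\<^sub>R w"
        "r = r0 + c * \<xi>" "s = r0' + c' * \<xi>"
        unfolding M'_def by blast
      show "r = s"
      proof (cases "c = c'")
        case True
        then have "a = a'" using h by simp
        then show ?thesis using h True Mf by blast
      next
        case False
        have "(a' + (-1) *\<^sub>R a, r0' + (-1) * r0) \<in> M" using Madd[OF h(2) Msc[OF h(1)]] .
        then have "((1/(c - c')) *\<^sub>R (a' - a), (1/(c-c')) * (r0' - r0)) \<in> M"
          using Msc by fastforce
        moreover have "(1/(c - c')) *\<^sub>R (a' - a) = w"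
        proof -
          have "a' - a = (c - c') *\<^sub>R w" using h(3,4) by (simp add: algebra_simps)
          then show ?thesis using False by simp
        qed
        ultimately show ?thesis using nw by auto
      qed
    next
      fix p r q s assume "(p,r) \<in> M'" "(q,s) \<in> M'"
      then obtain a r0 c b s0 d where h: "(a,r0)\<in>M" "(b,s0)\<in>M" "p = a + c *\<^sub>R w" "q = b + d *\<^sub>R w"
        "r = r0 + c * \<xi>" "s = s0 + d * \<xi>"
        unfolding M'_def by blast
      have "(p + q, r + s) = ((a + b) + (c + d) *\<^sub>R w, (r0 + s0) + (c + d) * \<xi>)"
        using h by (simp add: algebra_simps)
      then show "(p + q, r + s) \<in> M'" unfolding M'_def using Madd[OF h(1,2)] by blast
    next
      fix p r e assume "(p,r) \<in> M'"
      then obtain a r0 c where h: "(a,r0)\<in>M" "p = a + c *\<^sub>R w" "r = r0 + c * \<xi>"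
        unfolding M'_def by blast
      have "(e *\<^sub>R p, e * r) = (e *\<^sub>R a + (e * c) *\<^sub>R w, e * r0 + (e * c) * \<xi>)"
        using h by (simp add: algebra_simps)
      then show "(e *\<^sub>R p, e * r) \<in> M'" unfolding M'_def using Msc[OF h(1)] by blast
    next
      fix p r assume "(p,r) \<in> M'"
      then obtain a r0 c where h: "(a,r0)\<in>M" "p = a + c *\<^sub>R w" "r = r0 + c * \<xi>"
        unfolding M'_def by blast
      show "r \<le> norm p"
      proof (cases c "0::real" rule: linorder_cases)
        case less
        define d where "d = - c"
        have d: "d > 0" using less d_def by simp
        have "(1/d) * r0 - norm ((1/d) *\<^sub>R a - w) \<le> \<xi>"
          using lo[OF Msc[OF h(1), of "1/d"]] .
        then have "d * ((1/d) * r0 - norm ((1/d) *\<^sub>R a - w)) \<le> d * \<xi>"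
          using d by (simp add: mult_left_mono)
        moreover have "d * norm ((1/d) *\<^sub>R a - w) = norm (a - d *\<^sub>R w)"
        proof -
          have "d * norm ((1/d) *\<^sub>R a - w) = norm (d *\<^sub>R ((1/d) *\<^sub>R a - w))" using d by simp
          also have "d *\<^sub>R ((1/d) *\<^sub>R a - w) = a - d *\<^sub>R w" using d by (simp add: algebra_simps)
          finally show ?thesis .
        qed
        ultimately have "r0 - norm (a - d *\<^sub>R w) \<le> d * \<xi>" using d by (simp add: algebra_simps)
        then show ?thesis using h d_def by simp
      next
        case equal then show ?thesis using h Mb by simp
      next
        case greater
        have "\<xi> \<le> norm ((1/c) *\<^sub>R a + w) - (1/c) * r0"
          using hi[OF Msc[OF h(1), of "1/c"]] .
        then have "c * \<xi> \<le> c * (norm ((1/c) *\<^sub>R a + w) - (1/c) * r0)"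
          using greater by (simp add: mult_left_mono)
        moreover have "c * norm ((1/c) *\<^sub>R a + w) = norm (a + c *\<^sub>R w)"
        proof -
          have "c * norm ((1/c) *\<^sub>R a + w) = norm (c *\<^sub>R ((1/c) *\<^sub>R a + w))" using greater by simp
          also have "c *\<^sub>R ((1/c) *\<^sub>R a + w) = a + c *\<^sub>R w" using greater by (simp add: algebra_simps)
          finally show ?thesis .
        qed
        ultimately have "c * \<xi> \<le> norm (a + c *\<^sub>R w) - r0" using greater by (simp add: algebra_simps)
        then show ?thesis using h by simp
      qed
    next
      have "(z, norm z) = (z + 0 *\<^sub>R w, norm z + 0 * \<xi>)" by simp
      then show "(z, norm z) \<in> M'" unfolding M'_def using Mz by blast
    qed
    moreover have "M \<subseteq> M'"
    proof
      fix p assume p: "p \<in> M"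
      obtain a r where ar: "p = (a, r)" by (cases p)
      show "p \<in> M'" unfolding M'_def
        by (rule CollectI, rule exI[of _ a], rule exI[of _ r], rule exI[of _ 0]) (use p ar in simp)
    qed
    ultimately have "M' = M" using Mmax by blast
    moreover have "(w, \<xi>) \<in> M'"
    proof -
      have "(w, \<xi>) = (0 + 1 *\<^sub>R w, 0 + 1 * \<xi>)" by simp
      then show ?thesis unfolding M'_def using M0 by blast
    qed
    ultimately show False using nw by blast
  qed
  define g where "g w = (SOME r. (w,r) \<in> M)" for w
  have gM: "(w, g w) \<in> M" for w unfolding g_def using total[of w] by (rule someI_ex)
  show ?thesis
  proof (intro exI conjI allI)
    fix a b show "g (a + b) = g a + g b" using Mf[OF gM Madd[OF gM gM]] by simp
  next
    fix c a show "g (c *\<^sub>R a) = c * g a" using Mf[OF gM Msc[OF gM]] by simp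
  next
    fix a show "g a \<le> norm a" using Mb[OF gM] .
  next
    show "g z = norm z" using Mf[OF gM Mz] .
  qed
qed


lemma cs_one: "(1::complex) *\<^sub>C x = x"
  using cscale_of_real[of 1 x] by simp

lemma cs_real: "r *\<^sub>R x = complex_of_real r *\<^sub>C x"
  using cscale_of_real[of r x] by simp

lemma cs_ii: "\<i> *\<^sub>C (\<i> *\<^sub>C x) = - x"
proof -
  have "\<i> *\<^sub>C (\<i> *\<^sub>C x) = (-1) *\<^sub>C x" by (simp add: cscale_assoc)
  also have "\<dots> = - x" using cscale_of_real[of "-1" x] by simp
  finally show ?thesis .
qed

lemma cs_decomp: "c *\<^sub>C x = Re c *\<^sub>R x + Im c *\<^sub>R (\<i> *\<^sub>C x)"
proof -
  have "c *\<^sub>C x = (complex_of_real (Re c) + complex_of_real (Im c) * \<i>) *\<^sub>C x"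
    by (metis complex_eq mult.commute)
  also have "\<dots> = complex_of_real (Re c) *\<^sub>C x + complex_of_real (Im c) *\<^sub>C (\<i> *\<^sub>C x)"
    by (simp only: cscale_add_left cscale_assoc)
  also have "\<dots> = Re c *\<^sub>R x + Im c *\<^sub>R (\<i> *\<^sub>C x)"
    by (simp only: cscale_of_real)
  finally show ?thesis .
qed

lemma cs_scaleR_comm: "c *\<^sub>C (r *\<^sub>R x) = r *\<^sub>R (c *\<^sub>C x)"
  by (simp add: cs_real cscale_assoc mult.commute)

lemma cs_diff_left: "(a - b) *\<^sub>C x = a *\<^sub>C x - b *\<^sub>C x"
  by (metis add_diff_cancel cscale_add_left diff_add_cancel eq_diff_eq)

lemma complex_hahn_banach:
  fixes z :: "'a::complex_banach"
  shows "\<exists>f\<in>dual_space. (\<forall>y. cmod (f y) \<le> norm y) \<and> Re (f z) = norm z"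
proof -
  obtain g :: "'a \<Rightarrow> real" where gadd: "\<And>a b. g (a+b) = g a + g b"
    and gsc: "\<And>c a. g (c *\<^sub>R a) = c * g a" and gb: "\<And>a. g a \<le> norm a" and gz: "g z = norm z"
    using real_hahn_banach[of z] by blast
  have gneg: "g (- a) = - g a" for a using gsc[of "-1" a] by simp
  define f where "f y = complex_of_real (g y) - \<i> * complex_of_real (g (\<i> *\<^sub>C y))" for y
  have Ref: "Re (f y) = g y" for y by (simp add: f_def)
  have fadd: "f (a + b) = f a + f b" for a b
    by (simp add: f_def cscale_add_right gadd algebra_simps)
  have fR: "f (r *\<^sub>R a) = complex_of_real r * f a" for r a
    by (simp add: f_def cs_scaleR_comm gsc algebra_simps)
  have fi: "f (\<i> *\<^sub>C a) = \<i> * f a" for a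
    by (simp add: f_def cs_ii gneg algebra_simps)
  have fc: "f (c *\<^sub>C a) = c * f a" for c a
  proof -
    have "f (c *\<^sub>C a) = f (Re c *\<^sub>R a + Im c *\<^sub>R (\<i> *\<^sub>C a))"
      by (simp only: cs_decomp[of c a])
    also have "\<dots> = complex_of_real (Re c) * f a + complex_of_real (Im c) * (\<i> * f a)"
      by (simp only: fadd fR fi)
    also have "\<dots> = (complex_of_real (Re c) + \<i> * complex_of_real (Im c)) * f a"
      by (simp add: algebra_simps)
    also have "\<dots> = c * f a" using complex_eq[of c] by simp
    finally show ?thesis .
  qed
  have fb: "cmod (f y) \<le> norm y" for y
  proof (cases "f y = 0")
    case True then show ?thesis by simp
  next
    case False
    define c where "c = cnj (f y) / complex_of_real (cmod (f y))"
    have cm: "cmod c = 1" using False by (simp add: c_def norm_divide)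
    have sq: "f y * cnj (f y) = complex_of_real (cmod (f y)) * complex_of_real (cmod (f y))"
      by (simp only: complex_norm_square[symmetric] power2_eq_square of_real_mult)
    have "f (c *\<^sub>C y) = (f y * cnj (f y)) / complex_of_real (cmod (f y))"
      by (simp add: fc c_def mult.commute)
    also have "\<dots> = complex_of_real (cmod (f y))" unfolding sq using False by simp
    finally have "f (c *\<^sub>C y) = complex_of_real (cmod (f y))" .
    then have "cmod (f y) = g (c *\<^sub>C y)" by (metis Ref Re_complex_of_real)
    also have "\<dots> \<le> norm (c *\<^sub>C y)" by (rule gb)
    also have "\<dots> = norm y" by (simp add: norm_cscale cm)
    finally show ?thesis .
  qed
  have "bounded_linear f"
    by (rule bounded_linear_intro[where K=1]) (auto simp: fadd fR scaleR_conv_of_real fb)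
  then have "f \<in> dual_space" unfolding dual_space_def using fc by blast
  moreover have "(\<forall>y. cmod (f y) \<le> norm y) \<and> Re (f z) = norm z" using fb Ref gz by simp
  ultimately show ?thesis by blast
qed

lemma dual_add: "f \<in> dual_space \<Longrightarrow> g \<in> dual_space \<Longrightarrow> (\<lambda>x. f x + g x) \<in> dual_space"
  unfolding dual_space_def by (auto intro: bounded_linear_add simp: algebra_simps)

lemma dual_mult: "f \<in> dual_space \<Longrightarrow> (\<lambda>x. c * f x) \<in> dual_space"
  unfolding dual_space_def
  by (auto intro: bounded_linear_compose[OF bounded_linear_mult_right] simp: algebra_simps)

lemma weak_cluster:
  fixes y :: "'b \<Rightarrow> 'a::complex_banach"
  assumes refl: "reflexive_space TYPE('a)" and F: "F \<noteq> bot" and bnd: "\<And>t. norm (y t) \<le> 1"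
  shows "\<exists>z. norm z \<le> 1 \<and> (\<forall>f\<in>dual_space. \<forall>S. closed S \<longrightarrow> eventually (\<lambda>t. f (y t) \<in> S) F \<longrightarrow> f z \<in> S)"
proof -
  define B :: "('a \<Rightarrow> complex) \<Rightarrow> real" where "B f = (if f \<in> dual_space then onorm f else 0)" for f
  define K :: "(('a \<Rightarrow> complex) \<Rightarrow> complex) set" where "K = PiE UNIV (\<lambda>f. cball 0 (B f))"
  have "compactin (product_topology (\<lambda>_. euclidean) UNIV) K"
    unfolding K_def by (subst compactin_PiE) auto
  then have "compact K" by (simp add: euclidean_product_topology)
  define net where "net t = (\<lambda>f. if f \<in> dual_space then f (y t) else 0)" for t
  have netK: "net t \<in> K" for t
  proof -
    have "cmod (f (y t)) \<le> onorm f" if "f \<in> dual_space" for f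
    proof -
      have bl: "bounded_linear f" using that by (simp add: dual_space_def)
      have "cmod (f (y t)) \<le> onorm f * norm (y t)" by (rule onorm[OF bl])
      also have "\<dots> \<le> onorm f * 1" by (rule mult_left_mono[OF bnd onorm_pos_le[OF bl]])
      finally show ?thesis by simp
    qed
    then show ?thesis unfolding K_def net_def B_def by auto
  qed
  let ?G = "filtermap net F"
  have "?G \<noteq> bot" using F by (simp add: filtermap_bot_iff)
  moreover have "eventually (\<lambda>q. q \<in> K) ?G" by (simp add: eventually_filtermap netK)
  ultimately obtain p where pK: "p \<in> K" and pc: "inf (nhds p) ?G \<noteq> bot"
    using \<open>compact K\<close> unfolding compact_filter by blast
  have cl: "p \<in> C" if "closed C" "eventually (\<lambda>t. net t \<in> C) F" for C
  proof (rule ccontr)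
    assume "p \<notin> C"
    then have "eventually (\<lambda>q. q \<in> -C) (nhds p)" using that(1)
      by (intro eventually_nhds_in_open) auto
    moreover have "eventually (\<lambda>q. q \<in> C) ?G" using that(2) by (simp add: eventually_filtermap)
    ultimately have "eventually (\<lambda>q. False) (inf (nhds p) ?G)"
      unfolding eventually_inf by blast
    then show False using pc by (simp add: eventually_False)
  qed
  have padd: "p (\<lambda>x. f x + g x) = p f + p g" if "f \<in> dual_space" "g \<in> dual_space" for f g
  proof -
    have "p \<in> {q. q (\<lambda>x. f x + g x) = q f + q g}"
      by (rule cl) (auto intro!: closed_Collect_eq continuous_intros simp: net_def that dual_add)
    then show ?thesis by simp
  qed
  have pmult: "p (\<lambda>x. c * f x) = c * p f" if "f \<in> dual_space" for f c
  proof -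
    have "p \<in> {q. q (\<lambda>x. c * f x) = c * q f}"
      by (rule cl) (auto intro!: closed_Collect_eq continuous_intros simp: net_def that dual_mult)
    then show ?thesis by simp
  qed
  have pbnd: "cmod (p f) \<le> 1 * onorm f" if "f \<in> dual_space" for f
  proof -
    have "p f \<in> cball 0 (B f)" using pK by (simp add: K_def PiE_iff)
    then show ?thesis using that by (simp add: B_def)
  qed
  have hyp: "(\<forall>f\<in>dual_space. \<forall>g\<in>dual_space. p (\<lambda>x. f x + g x) = p f + p g) \<and>
     (\<forall>f\<in>dual_space. \<forall>c. p (\<lambda>x. c * f x) = c * p f) \<and>
     (\<exists>K. \<forall>f\<in>dual_space. cmod (p f) \<le> K * onorm f)"
    using padd pmult pbnd by blast
  obtain z where z: "\<And>f. f \<in> dual_space \<Longrightarrow> p f = f z"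
    using mp[OF spec[OF refl[unfolded reflexive_space_def], of p] hyp] by blast
  have wprop: "f z \<in> S" if "f \<in> dual_space" "closed S" "eventually (\<lambda>t. f (y t) \<in> S) F" for f S
  proof -
    have "p \<in> {q. q f \<in> S}"
      apply (rule cl)
      subgoal using closed_vimage[OF that(2) continuous_on_product_coordinates[of f]] by (simp add: vimage_def)
      subgoal using that(3) by (simp add: net_def that(1))
      done
    then show ?thesis using z[OF that(1)] by simp
  qed
  obtain h where h: "h \<in> dual_space" "\<And>v. cmod (h v) \<le> norm v" "Re (h z) = norm z"
    using complex_hahn_banach[of z] by blast
  have "\<forall>t. cmod (h (y t)) \<le> 1" using order.trans[OF h(2) bnd] by blast
  then have "h z \<in> cball 0 1"
    by (intro wprop[OF h(1)]) (auto intro: always_eventually)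
  then have "norm z \<le> 1" using h(3) complex_Re_le_cmod[of "h z"] by simp
  then show ?thesis using wprop by blast
qed


lemma gamma_cont:
  fixes \<gamma> :: "real \<Rightarrow> complex"
  assumes mult: "\<And>s t. s \<ge> 0 \<Longrightarrow> t \<ge> 0 \<Longrightarrow> \<gamma> (s+t) = \<gamma> s * \<gamma> t"
    and unit: "\<And>s. s \<ge> 0 \<Longrightarrow> cmod (\<gamma> s) = 1"
    and c0: "(\<gamma> \<longlongrightarrow> 1) (at_right 0)"
  shows "continuous_on {0..} \<gamma>"
  unfolding continuous_on_iff
proof (intro ballI allI impI)
  fix u e :: real assume u: "u \<in> {0..}" and e: "0 < e"
  obtain d where d: "d > 0" "\<And>h. 0 < h \<Longrightarrow> h < d \<Longrightarrow> dist (\<gamma> h) 1 < e"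
    using c0 e unfolding tendsto_iff eventually_at_right_field by force
  have key: "dist (\<gamma> v) (\<gamma> w) < e" if "0 \<le> w" "w \<le> v" "v - w < d" for v w
  proof (cases "v = w")
    case True then show ?thesis using e by simp
  next
    case False
    have "\<gamma> v = \<gamma> w * \<gamma> (v - w)" using mult[of w "v - w"] that by simp
    then have "dist (\<gamma> v) (\<gamma> w) = cmod (\<gamma> w) * cmod (\<gamma> (v - w) - 1)"
      by (simp add: dist_norm algebra_simps flip: norm_mult)
    also have "\<dots> = dist (\<gamma> (v - w)) 1" using unit[OF that(1)] by (simp add: dist_norm)
    also have "\<dots> < e" using d(2)[of "v - w"] that False by simp
    finally show ?thesis .
  qed
  show "\<exists>d>0. \<forall>x'\<in>{0..}. dist x' u < d \<longrightarrow> dist (\<gamma> x') (\<gamma> u) < e"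
  proof (intro exI[of _ d] conjI ballI impI)
    fix v assume v: "v \<in> {0::real..}" "dist v u < d"
    show "dist (\<gamma> v) (\<gamma> u) < e"
    proof (cases "u \<le> v")
      case True then show ?thesis using key[of u v] u v by (auto simp: dist_real_def)
    next
      case False then show ?thesis using key[of v u] u v by (auto simp: dist_real_def dist_commute)
    qed
  qed (use d in auto)
qed

lemma avg_lim:
  fixes \<gamma> :: "real \<Rightarrow> complex"
  assumes cont: "continuous_on {0..} \<gamma>" and a: "a \<ge> 0"
  shows "((\<lambda>h. integral {a..a+h} \<gamma> / complex_of_real h) \<longlongrightarrow> \<gamma> a) (at_right 0)"
  unfolding tendsto_iff
proof (intro allI impI)
  fix e :: real assume e: "e > 0"
  obtain d where d: "d > 0" "\<And>s. s \<in> {0..} \<Longrightarrow> dist s a < d \<Longrightarrow> dist (\<gamma> s) (\<gamma> a) < e/2"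
    using cont a e unfolding continuous_on_iff by (metis atLeast_iff half_gt_zero)
  show "eventually (\<lambda>h. dist (integral {a..a+h} \<gamma> / complex_of_real h) (\<gamma> a) < e) (at_right 0)"
    unfolding eventually_at_right_field
  proof (intro exI[of _ d] conjI allI impI)
    fix h :: real assume h: "0 < h" "h < d"
    have cs: "continuous_on {a..a+h} \<gamma>" by (rule continuous_on_subset[OF cont]) (use a in auto)
    have int: "\<gamma> integrable_on {a..a+h}" using cs by (rule integrable_continuous_interval)
    have "integral {a..a+h} (\<lambda>s. \<gamma> s - \<gamma> a) = integral {a..a+h} \<gamma> - complex_of_real h * \<gamma> a"
    proof -
      have "integral {a..a+h} (\<lambda>s. \<gamma> s - \<gamma> a) = integral {a..a+h} \<gamma> - integral {a..a+h} (\<lambda>s. \<gamma> a)"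
        by (intro integral_diff int integrable_continuous_interval continuous_on_const)
      moreover have "integral {a..a+h} (\<lambda>s. \<gamma> a) = complex_of_real h * \<gamma> a"
        using h by (simp add: scaleR_conv_of_real)
      ultimately show ?thesis by simp
    qed
    moreover have "norm (integral {a..a+h} (\<lambda>s. \<gamma> s - \<gamma> a)) \<le> e/2 * (a + h - a)"
    proof (rule integral_bound)
      show "continuous_on {a..a+h} (\<lambda>s. \<gamma> s - \<gamma> a)" using cs by (intro continuous_intros)
      fix t assume t: "t \<in> {a..a+h}"
      then have "dist (\<gamma> t) (\<gamma> a) < e/2" using d(2)[of t] a h by (auto simp: dist_real_def)
      then show "norm (\<gamma> t - \<gamma> a) \<le> e/2" by (simp add: dist_norm)
    qed (use h in auto)
    ultimately have "cmod (integral {a..a+h} \<gamma> - complex_of_real h * \<gamma> a) \<le> e/2 * h" by simp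
    moreover have "integral {a..a+h} \<gamma> / complex_of_real h - \<gamma> a
        = (integral {a..a+h} \<gamma> - complex_of_real h * \<gamma> a) / complex_of_real h"
      using h by (simp add: field_simps)
    ultimately have "dist (integral {a..a+h} \<gamma> / complex_of_real h) (\<gamma> a) \<le> e/2"
      using h by (simp add: dist_norm norm_divide divide_le_eq)
    then show "dist (integral {a..a+h} \<gamma> / complex_of_real h) (\<gamma> a) < e" using e by simp
  qed (use d in auto)
qed

lemma scalar_deriv:
  fixes \<gamma> :: "real \<Rightarrow> complex"
  assumes mult: "\<And>s t. s \<ge> 0 \<Longrightarrow> t \<ge> 0 \<Longrightarrow> \<gamma> (s+t) = \<gamma> s * \<gamma> t"
    and unit: "\<And>s. s \<ge> 0 \<Longrightarrow> cmod (\<gamma> s) = 1"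
    and c0: "(\<gamma> \<longlongrightarrow> 1) (at_right 0)"
  shows "\<exists>l::real. ((\<lambda>h. (\<gamma> h - 1) / complex_of_real h) \<longlongrightarrow> \<i> * complex_of_real l) (at_right 0)"
proof -
  have cont: "continuous_on {0..} \<gamma>" by (rule gamma_cont[OF mult unit c0])
  have g0: "\<gamma> 0 = 1"
  proof -
    have "\<gamma> 0 = \<gamma> 0 * \<gamma> 0" using mult[of 0 0] by simp
    moreover have "\<gamma> 0 \<noteq> 0" using unit[of 0] by auto
    ultimately show ?thesis by (metis mult_cancel_left1)
  qed
  define I where "I h = integral {0..h} \<gamma>" for h
  have lim0: "((\<lambda>h. I h / complex_of_real h) \<longlongrightarrow> 1) (at_right 0)"
    using avg_lim[OF cont, of 0] g0 by (simp add: I_def)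
  obtain \<delta> where \<delta>: "\<delta> > 0" "I \<delta> \<noteq> 0"
  proof -
    have "eventually (\<lambda>h. dist (I h / complex_of_real h) 1 < 1) (at_right 0)"
      using lim0 unfolding tendsto_iff by simp
    then obtain b where b: "b > 0" "\<And>y. 0 < y \<Longrightarrow> y < b \<Longrightarrow> dist (I y / complex_of_real y) 1 < 1"
      unfolding eventually_at_right_field by auto
    have "dist (I (b/2) / complex_of_real (b/2)) 1 < 1" by (rule b(2)) (use b in auto)
    then have "I (b/2) \<noteq> 0" by auto
    then show ?thesis using that[of "b/2"] b by simp
  qed
  have int: "\<gamma> integrable_on {a..b}" if "0 \<le> a" for a b
    using continuous_on_subset[OF cont, of "{a..b}"] that by (intro integrable_continuous_interval) auto
  have ident: "\<gamma> h * I \<delta> - I \<delta> = integral {\<delta>..\<delta>+h} \<gamma> - integral {0..0+h} \<gamma>" if h: "h > 0" for h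
  proof -
    have "\<gamma> h * I \<delta> = integral {0..\<delta>} (\<lambda>s. \<gamma> h * \<gamma> s)" by (simp add: I_def)
    also have "\<dots> = integral {0..\<delta>} (\<gamma> \<circ> (+) h)"
      by (rule integral_cong) (use mult h in auto)
    also have "\<dots> = integral {h..\<delta>+h} \<gamma>"
    proof (rule integral_unique)
      show "((\<gamma> \<circ> (+) h) has_integral integral {h..\<delta>+h} \<gamma>) {0..\<delta>}"
        using has_integral_shift_Icc_real[of \<gamma> h "integral {h..\<delta>+h} \<gamma>" 0 \<delta>] int[of h "\<delta>+h"] h
        by (simp add: integrable_integral)
    qed
    finally have e1: "\<gamma> h * I \<delta> = integral {h..\<delta>+h} \<gamma>" .
    have c1: "integral {0..h} \<gamma> + integral {h..\<delta>+h} \<gamma> = integral {0..\<delta>+h} \<gamma>"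
      by (rule Henstock_Kurzweil_Integration.integral_combine) (use h \<delta> int in auto)
    have c2: "integral {0..\<delta>} \<gamma> + integral {\<delta>..\<delta>+h} \<gamma> = integral {0..\<delta>+h} \<gamma>"
      by (rule Henstock_Kurzweil_Integration.integral_combine) (use h \<delta> int in auto)
    show ?thesis using e1 c1 c2 by (simp add: I_def algebra_simps)
  qed
  define \<mu> where "\<mu> = (\<gamma> \<delta> - 1) / I \<delta>"
  have lim: "((\<lambda>h. (\<gamma> h - 1) / complex_of_real h) \<longlongrightarrow> \<mu>) (at_right 0)"
  proof -
    have "((\<lambda>h. (integral {\<delta>..\<delta>+h} \<gamma> / complex_of_real h - integral {0..0+h} \<gamma> / complex_of_real h) / I \<delta>)
       \<longlongrightarrow> (\<gamma> \<delta> - \<gamma> 0) / I \<delta>) (at_right 0)"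
      by (intro tendsto_intros avg_lim[OF cont] \<delta>) (use \<delta> in auto)
    moreover have "eventually (\<lambda>h. (integral {\<delta>..\<delta>+h} \<gamma> / complex_of_real h - integral {0..0+h} \<gamma> / complex_of_real h) / I \<delta>
        = (\<gamma> h - 1) / complex_of_real h) (at_right 0)"
      unfolding eventually_at_right_field
    proof (intro exI[of _ 1] conjI allI impI)
      fix h :: real assume h: "0 < h" "h < 1"
      have "(\<gamma> h - 1) / complex_of_real h = (\<gamma> h * I \<delta> - I \<delta>) / (complex_of_real h * I \<delta>)"
        using \<delta> h by (simp add: field_simps)
      also have "\<dots> = (integral {\<delta>..\<delta>+h} \<gamma> / complex_of_real h - integral {0..0+h} \<gamma> / complex_of_real h) / I \<delta>"
        unfolding ident[OF h(1)] using \<delta> h by (simp add: field_simps)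
      finally show "(integral {\<delta>..\<delta>+h} \<gamma> / complex_of_real h - integral {0..0+h} \<gamma> / complex_of_real h) / I \<delta>
        = (\<gamma> h - 1) / complex_of_real h" by simp
    qed simp
    ultimately have "((\<lambda>h. (\<gamma> h - 1) / complex_of_real h) \<longlongrightarrow> (\<gamma> \<delta> - \<gamma> 0) / I \<delta>) (at_right 0)"
      by (rule Lim_transform_eventually)
    then show ?thesis using g0 unfolding \<mu>_def by simp
  qed
  have "((\<lambda>h. (\<gamma> h - 1) / complex_of_real h * cnj (\<gamma> h) + cnj ((\<gamma> h - 1) / complex_of_real h))
      \<longlongrightarrow> \<mu> * cnj 1 + cnj \<mu>) (at_right 0)"
    by (intro tendsto_intros lim c0)
  moreover have "eventually (\<lambda>h. (\<gamma> h - 1) / complex_of_real h * cnj (\<gamma> h) + cnj ((\<gamma> h - 1) / complex_of_real h) = 0) (at_right 0)"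
    unfolding eventually_at_right_field
  proof (intro exI[of _ 1] conjI allI impI)
    fix h :: real assume h: "0 < h" "h < 1"
    have "\<gamma> h * cnj (\<gamma> h) = 1"
      using unit[of h] h complex_norm_square[of "\<gamma> h"] by simp
    then show "(\<gamma> h - 1) / complex_of_real h * cnj (\<gamma> h) + cnj ((\<gamma> h - 1) / complex_of_real h) = 0"
      using h by (simp add: field_simps)
  qed simp
  ultimately have "((\<lambda>h. 0) \<longlongrightarrow> \<mu> * cnj 1 + cnj \<mu>) (at_right (0::real))"
    by (rule Lim_transform_eventually)
  then have "\<mu> + cnj \<mu> = 0" by (subst (asm) tendsto_const_iff) auto
  then have "Re \<mu> = 0" by (metis complex_add_cnj of_real_eq_0_iff mult_eq_0_iff zero_neq_numeral)
  then have "\<mu> = \<i> * complex_of_real (Im \<mu>)" by (simp add: complex_eq_iff)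
  then show ?thesis using lim by metis
qed


lemma dual_comp: "f \<in> dual_space \<Longrightarrow> bounded_clinear_op L \<Longrightarrow> (\<lambda>v. f (L v)) \<in> dual_space"
  unfolding dual_space_def bounded_clinear_op_def
  by (auto intro: bounded_linear_compose[of f L])

lemma cscale_bl: "bounded_linear (\<lambda>c. c *\<^sub>C (x::'a::complex_banach))"
proof (rule bounded_linear_intro[where K="norm x"])
  fix a b :: complex show "(a + b) *\<^sub>C x = a *\<^sub>C x + b *\<^sub>C x" by (rule cscale_add_left)
next
  fix r :: real and c :: complex
  have "(r *\<^sub>R c) *\<^sub>C x = (complex_of_real r * c) *\<^sub>C x" by (simp add: scaleR_conv_of_real)
  also have "\<dots> = complex_of_real r *\<^sub>C (c *\<^sub>C x)" by (simp add: cscale_assoc)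
  also have "\<dots> = r *\<^sub>R (c *\<^sub>C x)" by (simp add: cscale_of_real)
  finally show "(r *\<^sub>R c) *\<^sub>C x = r *\<^sub>R (c *\<^sub>C x)" .
next
  fix c :: complex show "norm (c *\<^sub>C x) \<le> norm c * norm x" by (simp add: norm_cscale)
qed

theorem theorem5:
  fixes T :: "real \<Rightarrow> 'a::complex_banach \<Rightarrow> 'a"
    and x :: 'a and xs :: "'a \<Rightarrow> complex"
  assumes "reflexive_space TYPE('a)"
    and "exposes xs x"
    and "C0_contraction_semigroup T"
    and "((\<lambda>t. cmod (xs (T t x))) \<longlongrightarrow> 1) at_top"
  shows "x \<in> gen_domain T \<and> (\<exists>l::real. generator T x = (\<i> * complex_of_real l) *\<^sub>C x)"
proof -
  from assms(2) have xsd: "xs \<in> dual_space" and nx: "norm x = 1" and on: "onorm xs = 1"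
    and xsx: "xs x = 1" and uniq: "\<And>y. norm y = 1 \<Longrightarrow> y \<noteq> x \<Longrightarrow> Re (xs y) < 1"
    unfolding exposes_def by auto
  from assms(3) have Tcl: "\<And>t. t \<ge> 0 \<Longrightarrow> bounded_clinear_op (T t)" and T0: "\<And>v. T 0 v = v"
    and Tsg: "\<And>s t v. s \<ge> 0 \<Longrightarrow> t \<ge> 0 \<Longrightarrow> T (s + t) v = T s (T t v)"
    and Tc: "\<And>v. ((\<lambda>t. T t v) \<longlongrightarrow> v) (at_right 0)"
    and Tn: "\<And>t v. t \<ge> 0 \<Longrightarrow> norm (T t v) \<le> norm v"
    unfolding C0_contraction_semigroup_def by auto
  have xsbl: "bounded_linear xs" using xsd by (simp add: dual_space_def)
  have xsc: "xs (c *\<^sub>C v) = c * xs v" for c v using xsd by (simp add: dual_space_def)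
  have xsb: "cmod (xs v) \<le> norm v" for v using onorm[OF xsbl, of v] on by simp
  have Tlin: "T t (c *\<^sub>C v) = c *\<^sub>C T t v" if "t \<ge> 0" for t c v
    using Tcl[OF that] by (simp add: bounded_clinear_op_def)
  have unitmult: "w = xs w *\<^sub>C x" if w1: "norm w \<le> 1" and w2: "cmod (xs w) = 1" for w
  proof -
    define \<alpha> where "\<alpha> = cnj (xs w)"
    have cc: "cnj (xs w) * xs w = 1"
      using complex_norm_square[of "xs w"] w2 by (simp add: mult.commute)
    have a1: "xs (\<alpha> *\<^sub>C w) = 1" by (simp add: xsc \<alpha>_def cc)
    have a2: "norm (\<alpha> *\<^sub>C w) = norm w" by (simp add: norm_cscale \<alpha>_def w2)
    have a3: "norm (\<alpha> *\<^sub>C w) = 1"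
      using a1 a2 w1 xsb[of "\<alpha> *\<^sub>C w"] by simp
    have a4: "\<alpha> *\<^sub>C w = x"
    proof (rule ccontr)
      assume "\<alpha> *\<^sub>C w \<noteq> x"
      then have "Re (xs (\<alpha> *\<^sub>C w)) < 1" using uniq a3 by blast
      then show False using a1 by simp
    qed
    have "xs w *\<^sub>C x = xs w *\<^sub>C (\<alpha> *\<^sub>C w)" using a4 by simp
    also have "\<dots> = (xs w * \<alpha>) *\<^sub>C w" by (simp add: cscale_assoc)
    also have "\<dots> = w" using cc by (simp add: \<alpha>_def mult.commute cs_one)
    finally show ?thesis by simp
  qed
  define y where "y t = T (max t 0) x" for t
  have yb: "norm (y t) \<le> 1" for t using Tn[of "max t 0" x] nx by (simp add: y_def)
  obtain z where zn: "norm z \<le> 1"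
    and zp: "\<And>f S. f \<in> dual_space \<Longrightarrow> closed S \<Longrightarrow> eventually (\<lambda>t. f (y t) \<in> S) at_top \<Longrightarrow> f z \<in> S"
    using weak_cluster[OF assms(1), of "at_top :: real filter" y] yb by auto
  have Tz: "cmod (xs (T s z)) = 1 \<and> T s z = xs (T s z) *\<^sub>C x" if s: "s \<ge> 0" for s
  proof -
    have fd: "(\<lambda>v. xs (T s v)) \<in> dual_space" by (rule dual_comp[OF xsd Tcl[OF s]])
    have nw: "norm (T s z) \<le> 1" using Tn[OF s, of z] zn by simp
    have c1: "cmod (xs (T s z)) = 1"
    proof (rule ccontr)
      assume ne: "cmod (xs (T s z)) \<noteq> 1"
      define e where "e = \<bar>cmod (xs (T s z)) - 1\<bar> / 2"
      have e: "e > 0" using ne by (simp add: e_def)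
      have closedS: "closed ((\<lambda>c. norm c) -` {1-e..1+e::real})"
        by (intro closed_vimage closed_atLeastAtMost continuous_on_norm_id)
      have "eventually (\<lambda>u. dist (cmod (xs (T u x))) 1 < e) at_top"
        using assms(4) e by (simp add: tendsto_iff)
      then obtain N where N: "\<And>u. u \<ge> N \<Longrightarrow> dist (cmod (xs (T u x))) 1 < e"
        by (auto simp: eventually_at_top_linorder)
      have ev: "eventually (\<lambda>t. xs (T s (y t)) \<in> (\<lambda>c. norm c) -` {1-e..1+e}) at_top"
        unfolding eventually_at_top_linorder
      proof (intro exI[of _ "max N 0"] allI impI)
        fix t assume t: "max N 0 \<le> t"
        then have "y t = T t x" by (simp add: y_def)
        then have "T s (y t) = T (s + t) x" using Tsg[OF s, of t x] t by simp
        moreover have "dist (cmod (xs (T (s+t) x))) 1 < e" using N[of "s+t"] s t by simp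
        ultimately show "xs (T s (y t)) \<in> (\<lambda>c. norm c) -` {1-e..1+e}"
          by (simp add: dist_real_def abs_less_iff)
      qed
      have "xs (T s z) \<in> (\<lambda>c. norm c) -` {1-e..1+e}"
        using zp[OF fd closedS ev] .
      then have "\<bar>cmod (xs (T s z)) - 1\<bar> \<le> e" by auto
      then show False using e unfolding e_def by simp
    qed
    show ?thesis using c1 unitmult[OF nw c1] by simp
  qed
  define \<gamma> where "\<gamma> s = xs (T s x)" for s
  have zx: "z = xs z *\<^sub>C x" and czn: "cmod (xs z) = 1" using Tz[of 0] T0 by auto
  have Tx: "T s x = \<gamma> s *\<^sub>C x \<and> cmod (\<gamma> s) = 1" if s: "s \<ge> 0" for s
  proof -
    define c where "c = xs z"
    define d where "d = xs (T s z)"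
    have cd: "cmod c = 1" "cmod d = 1" using czn Tz[OF s] by (auto simp: c_def d_def)
    then have c0: "c \<noteq> 0" by auto
    have "c *\<^sub>C T s x = d *\<^sub>C x"
      using Tz[OF s] zx Tlin[OF s, of c x] by (simp add: c_def d_def)
    then have "inverse c *\<^sub>C (c *\<^sub>C T s x) = inverse c *\<^sub>C (d *\<^sub>C x)" by simp
    then have e1: "T s x = (inverse c * d) *\<^sub>C x" using c0 by (simp add: cscale_assoc cs_one)
    then have "\<gamma> s = inverse c * d" by (simp add: \<gamma>_def xsc xsx)
    then show ?thesis using e1 cd by (simp add: norm_mult norm_inverse)
  qed
  have gmult: "\<gamma> (s + t) = \<gamma> s * \<gamma> t" if "s \<ge> 0" "t \<ge> 0" for s t
  proof -
    have "T (s + t) x = (\<gamma> t * \<gamma> s) *\<^sub>C x"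
      using Tsg[OF that, of x] Tx[OF that(2)] Tx[OF that(1)] Tlin[OF that(1)] by (simp add: cscale_assoc)
    then show ?thesis by (simp add: \<gamma>_def xsc xsx mult.commute)
  qed
  have gc0: "(\<gamma> \<longlongrightarrow> 1) (at_right 0)"
  proof -
    have ge: "\<gamma> = (\<lambda>t. xs (T t x))" by (rule ext) (simp add: \<gamma>_def)
    show ?thesis using bounded_linear.tendsto[OF xsbl Tc[of x]] xsx unfolding ge by simp
  qed
  obtain l where lim: "((\<lambda>h. (\<gamma> h - 1) / complex_of_real h) \<longlongrightarrow> \<i> * complex_of_real l) (at_right 0)"
    using scalar_deriv[of \<gamma>] gmult Tx gc0 by blast
  have lim2: "((\<lambda>h. ((\<gamma> h - 1) / complex_of_real h) *\<^sub>C x) \<longlongrightarrow> (\<i> * complex_of_real l) *\<^sub>C x) (at_right 0)"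
    by (rule bounded_linear.tendsto[OF cscale_bl lim])
  have eq: "eventually (\<lambda>h. ((\<gamma> h - 1) / complex_of_real h) *\<^sub>C x = (1 / h) *\<^sub>R (T h x - x)) (at_right 0)"
    unfolding eventually_at_right_field
  proof (intro exI[of _ 1] conjI allI impI)
    fix h :: real assume h: "0 < h" "h < 1"
    have "T h x - x = (\<gamma> h - 1) *\<^sub>C x" using Tx[of h] h by (simp add: cs_diff_left cs_one)
    then have "(1 / h) *\<^sub>R (T h x - x) = (complex_of_real (1/h) * (\<gamma> h - 1)) *\<^sub>C x"
      by (simp add: cs_real cscale_assoc)
    also have "complex_of_real (1/h) * (\<gamma> h - 1) = (\<gamma> h - 1) / complex_of_real h"
      by (simp add: field_simps)
    finally show "((\<gamma> h - 1) / complex_of_real h) *\<^sub>C x = (1 / h) *\<^sub>R (T h x - x)" by simp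
  qed simp
  have lim3: "((\<lambda>h. (1 / h) *\<^sub>R (T h x - x)) \<longlongrightarrow> (\<i> * complex_of_real l) *\<^sub>C x) (at_right 0)"
    by (rule Lim_transform_eventually[OF lim2 eq])
  have "x \<in> gen_domain T" unfolding gen_domain_def using lim3 by blast
  moreover have "generator T x = (\<i> * complex_of_real l) *\<^sub>C x"
    unfolding generator_def by (rule tendsto_Lim[OF _ lim3]) simp
  ultimately show ?thesis by blast
qed

end
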